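(* Let $\Lambda=\Lambda_{({\bf A},{\bf B},{\bf c})}:\mathcal L(\mathcal H^{\otimes N'})\to\mathcal L(\mathcal H^{\otimes N})$ be a Gaussian channel, applied on Alice's side. The following are equivalent: (i) $\Lambda$ is Gaussian incompatibility breaking; (ii) $\Lambda$ is Gaussian steerability breaking; (iii) $\Lambda$ breaks the steerability of all EPR-states $\rho_r$, $r\ge0$.
   Context: For $n\ge1$, $\mathcal H^{\otimes n}=L^2(\mathbb R^n)$ with canonical position and momentum operators $Q_j,P_j$, ${\bf R}=(Q_1,P_1,\ldots,Q_n,P_n)^T$, ${\bf \Omega}=\bigoplus_{j=1}^n\begin{pmatrix}0&1\\-1&0\end{pmatrix}$ (size fixed by context), and Weyl operators $W({\bf x})=e^{-i{\bf x}^T{\bf \Omega R}}$. A Gaussian state $\rho$ has $\mathrm{tr}[\rho W({\bf x})]=e^{-\frac14{\bf x}^T{\bf \Omega}^T{\bf V\Omega x}-i({\bf \Omega r})^T{\bf x}}$, with covariance matrix $V_{ij}=\mathrm{tr}[\rho\{R_i-r_i,R_j-r_j\}]$, $r_j=\mathrm{tr}[\rho R_j]$; ${\bf V}+i{\bf \Omega}\ge0$. A Gaussian channel is a normal unital completely positive map $\Lambda:\mathcal L(\mathcal H^{\otimes N'})\to\mathcal L(\mathcal H^{\otimes N})$ (Heisenberg picture) with $\Lambda(W({\bf x}))=W({\bf Ax})e^{-\frac14{\bf x}^T{\bf Bx}-i{\bf c}^T{\bf x}}$, ${\bf A}$ real $2N\times2N'$, ${\bf B}$ real $2N'\times2N'$,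 ${\bf c}\in\mathbb R^{2N'}$, with ${\bf B}+i{\bf \Omega}-i{\bf A}^T{\bf \Omega A}\ge0$. An observable is a POVM $\mathsf{E}:\mathcal B(\mathbb R^M)\to\mathcal L(\mathcal H^{\otimes n})$; it is Gaussian if $\int e^{i{\bf p}^T{\bf x}}\,d\mathsf{E}({\bf x})=W({\bf Kp})e^{-\frac14{\bf p}^T{\bf Lp}-i{\bf m}^T{\bf p}}$ with ${\bf K}$ real $2n\times M$, ${\bf L}$ real $M\times M$, ${\bf L}-i{\bf K}^T{\bf \Omega K}\ge0$, ${\bf m}\in\mathbb R^M$; $\Lambda(\mathsf{E})$ denotes $X\mapsto\Lambda(\mathsf{E}(X))$. A Gaussian postprocessing is a Markov kernel $f:\mathcal B(\mathbb R^{M'})\times\mathbb R^M\to[0,1]$ with $\int e^{i{\bf p}^T{\bf y}}f(d{\bf y},{\bf x})=e^{i({\bf A}'{\bf p})^T{\bf x}}e^{-\frac14{\bf p}^T{\bf B}'{\bf p}-i{\bf c}'^T{\bf p}}$ for some real $M\times M'$ matrix ${\bf A}'$, real positive semidefinite ${\bf B}'$, vector ${\bf c}'$; $\mathsf{E}$ is obtained from $\mathsf{G}$ via $f$ if $\mathsf{E}(X)=\int f(X,{\bf x})\,d\mathsf{G}({\bf x})$. A collection of Gaussian observables is Gaussian compatible if there is a Gaussian observable from which each member is obtained via some Gaussian postprocessing; $\Lambda$ is Gaussian incompatibility breaking if $\{\Lambda(\mathsf{E}):\mathsf{E}$ Gaussian observable on $\mathcal H^{\otimes N'}\}$ is Gaussian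 compatible. Steering: a bipartite Gaussian state (Alice's part first, Bob's part second) with covariance matrix ${\bf V}$ is called non-steerable (by Alice's Gaussian measurements) if ${\bf V}+i({\bf 0}\oplus{\bf \Omega})\ge0$, where ${\bf 0}$ acts on Alice's phase space and ${\bf \Omega}$ on Bob's. If a bipartite Gaussian state with covariance matrix ${\bf V}_0$ (Alice having $N$ modes) is subjected to $\Lambda_{({\bf A},{\bf B},{\bf c})}$ on Alice's side, the resulting Gaussian state has covariance matrix ${\bf V}={\bf \Omega}({\bf A}\oplus{\bf I})^T{\bf \Omega}^T{\bf V}_0{\bf \Omega}({\bf A}\oplus{\bf I}){\bf \Omega}^T+{\bf \Omega}({\bf B}\oplus{\bf 0}){\bf \Omega}^T$; $\Lambda$ breaks the steerability of that state if this ${\bf V}$ satisfies ${\bf V}+i({\bf 0}\oplus{\bf \Omega})\ge0$. $\Lambda$ is Gaussian steerability breaking if it breaks the steerability of every bipartite Gaussian state. The EPR-states $\rho_r$ ($r\ge0$) are the Gaussian pure states on $N+N$ modes with covariance matrix ${\bf V}_0(r)=\begin{pmatrix}\cosh r\,{\bf I}&\sinh r\,{\bf Z}\\ \sinh r\,{\bf Z}&\cosh r\,{\bf I}\end{pmatrix}$, ${\bf Z}=\bigoplus_{j=1}^N\sigma_z$. *)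

theory Defs
  imports Complex_Main "Jordan_Normal_Form.Matrix"
begin

text \<open>Symplectic form Omega on n modes: direct sum of n copies of [[0,1],[-1,0]].\<close>
definition omega :: "nat \<Rightarrow> real mat" where
  "omega n = mat (2*n) (2*n) (\<lambda>(i,j).
      if even i \<and> j = i + 1 then 1 else if odd i \<and> i = j + 1 then -1 else 0)"

definition cmat :: "real mat \<Rightarrow> complex mat" where
  "cmat M = map_mat complex_of_real M"

definition psd :: "complex mat \<Rightarrow> bool" where
  "psd M \<longleftrightarrow> (\<exists>n. M \<in> carrier_mat n n \<and>
     (\<forall>v \<in> carrier_vec n.
        let q = (\<Sum>i<n. \<Sum>j<n. cnj (v $ i) * M $$ (i,j) * v $ j)
        in Im q = 0 \<and> Re q \<ge> 0))"

definition dsum :: "real mat \<Rightarrow> real mat \<Rightarrow> real mat" where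
  "dsum P Q = four_block_mat P (0\<^sub>m (dim_row P) (dim_col Q)) (0\<^sub>m (dim_row Q) (dim_col P)) Q"

text \<open>Gaussian channel Lambda_(A,B,c) : L(H^{N'}) \<rightarrow> L(H^N) (Heisenberg picture),
  identified with its parameters.\<close>
definition gaussian_channel :: "nat \<Rightarrow> nat \<Rightarrow> real mat \<Rightarrow> real mat \<Rightarrow> real vec \<Rightarrow> bool" where
  "gaussian_channel N N' A B c \<longleftrightarrow>
     A \<in> carrier_mat (2*N) (2*N') \<and> B \<in> carrier_mat (2*N') (2*N') \<and> c \<in> carrier_vec (2*N') \<and>
     psd (cmat B + \<i> \<cdot>\<^sub>m cmat (omega N') - \<i> \<cdot>\<^sub>m cmat (transpose_mat A * omega N * A))"

text \<open>A Gaussian observable on n modes with outcome space R^M is (uniquely) determined by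
  its parameters (K, L, m) in its characteristic function
  W(Kp) exp(-1/4 p^T L p - i m^T p); every admissible triple defines one.\<close>
type_synonym gobs = "real mat \<times> real mat \<times> real vec"

definition outdim :: "gobs \<Rightarrow> nat" where
  "outdim E = dim_col (fst E)"

definition gaussian_obs :: "nat \<Rightarrow> gobs \<Rightarrow> bool" where
  "gaussian_obs n E \<longleftrightarrow> (case E of (K, L, m) \<Rightarrow>
     let M = dim_col K in M \<ge> 1 \<and>
     K \<in> carrier_mat (2*n) M \<and> L \<in> carrier_mat M M \<and> m \<in> carrier_vec M \<and>
     psd (cmat L - \<i> \<cdot>\<^sub>m cmat (transpose_mat K * omega n * K)))"

text \<open>Gaussian postprocessing R^M \<rightarrow> R^M', identified with its parameters (A', B', c').\<close>
definition gaussian_postproc :: "nat \<Rightarrow> nat \<Rightarrow> gobs \<Rightarrow> bool" where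
  "gaussian_postproc M M' f \<longleftrightarrow> (case f of (A', B', c') \<Rightarrow>
     A' \<in> carrier_mat M M' \<and> B' \<in> carrier_mat M' M' \<and> c' \<in> carrier_vec M' \<and> psd (cmat B'))"

text \<open>Parameters of the observable E(X) = \<integral> f(X,x) dG(x) obtained from G via f.\<close>
definition postprocess :: "gobs \<Rightarrow> gobs \<Rightarrow> gobs" where
  "postprocess G f = (case G of (KG, LG, mG) \<Rightarrow> case f of (A', B', c') \<Rightarrow>
     (KG * A', transpose_mat A' * LG * A' + B', transpose_mat A' *\<^sub>v mG + c'))"

definition obtained_via :: "gobs \<Rightarrow> gobs \<Rightarrow> gobs \<Rightarrow> bool" where
  "obtained_via E G f \<longleftrightarrow> E = postprocess G f"

definition gaussian_compatible :: "nat \<Rightarrow> gobs set \<Rightarrow> bool" where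
  "gaussian_compatible n S \<longleftrightarrow>
     (\<exists>G. gaussian_obs n G \<and>
        (\<forall>E\<in>S. \<exists>f. gaussian_postproc (outdim G) (outdim E) f \<and> obtained_via E G f))"

text \<open>Parameters of the observable Lambda(E) = Lambda \<circ> E.\<close>
definition channel_obs :: "real mat \<Rightarrow> real mat \<Rightarrow> real vec \<Rightarrow> gobs \<Rightarrow> gobs" where
  "channel_obs A B c E = (case E of (K, L, m) \<Rightarrow>
     (A * K, L + transpose_mat K * B * K, m + transpose_mat K *\<^sub>v c))"

definition gaussian_incompatibility_breaking ::
  "nat \<Rightarrow> nat \<Rightarrow> real mat \<Rightarrow> real mat \<Rightarrow> real vec \<Rightarrow> bool" where
  "gaussian_incompatibility_breaking N N' A B c \<longleftrightarrow>
     gaussian_compatible N (channel_obs A B c ` {E. gaussian_obs N' E})"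

definition gaussian_cov :: "nat \<Rightarrow> real mat \<Rightarrow> bool" where
  "gaussian_cov n V \<longleftrightarrow> V \<in> carrier_mat (2*n) (2*n) \<and> psd (cmat V + \<i> \<cdot>\<^sub>m cmat (omega n))"

text \<open>Non-steerability (by Alice's Gaussian measurements) of a bipartite Gaussian state
  with Alice having nA modes and Bob nB modes.\<close>
definition non_steerable :: "nat \<Rightarrow> nat \<Rightarrow> real mat \<Rightarrow> bool" where
  "non_steerable nA nB V \<longleftrightarrow>
     psd (cmat V + \<i> \<cdot>\<^sub>m cmat (dsum (0\<^sub>m (2*nA) (2*nA)) (omega nB)))"

text \<open>Covariance matrix after applying Lambda_(A,B,c) on Alice's side
  (Alice N modes \<rightarrow> N' modes, Bob M modes).\<close>
definition channel_cov :: "nat \<Rightarrow> nat \<Rightarrow> nat \<Rightarrow> real mat \<Rightarrow> real mat \<Rightarrow> real mat \<Rightarrow> real mat" where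
  "channel_cov N N' M A B V0 =
     omega (N'+M) * transpose_mat (dsum A (1\<^sub>m (2*M))) * transpose_mat (omega (N+M)) * V0
       * omega (N+M) * dsum A (1\<^sub>m (2*M)) * transpose_mat (omega (N'+M))
     + omega (N'+M) * dsum B (0\<^sub>m (2*M) (2*M)) * transpose_mat (omega (N'+M))"

definition breaks_steerability :: "nat \<Rightarrow> nat \<Rightarrow> nat \<Rightarrow> real mat \<Rightarrow> real mat \<Rightarrow> real mat \<Rightarrow> bool" where
  "breaks_steerability N N' M A B V0 \<longleftrightarrow> non_steerable N' M (channel_cov N N' M A B V0)"

definition gaussian_steerability_breaking ::
  "nat \<Rightarrow> nat \<Rightarrow> real mat \<Rightarrow> real mat \<Rightarrow> bool" where
  "gaussian_steerability_breaking N N' A B \<longleftrightarrow>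
     (\<forall>M V0. M \<ge> 1 \<longrightarrow> gaussian_cov (N+M) V0 \<longrightarrow> breaks_steerability N N' M A B V0)"

definition epr_cov :: "nat \<Rightarrow> real \<Rightarrow> real mat" where
  "epr_cov N r = (let Z = mat (2*N) (2*N) (\<lambda>(i,j). if i = j then (if even i then 1 else -1) else 0)
     in four_block_mat (cosh r \<cdot>\<^sub>m 1\<^sub>m (2*N)) (sinh r \<cdot>\<^sub>m Z) (sinh r \<cdot>\<^sub>m Z) (cosh r \<cdot>\<^sub>m 1\<^sub>m (2*N)))"

end

theory Submission
  imports Defs
begin

definition rq :: "real mat \<Rightarrow> real vec \<Rightarrow> real vec \<Rightarrow> real" where
  "rq M a b = a \<bullet> (M *\<^sub>v b)"

lemma rq_sum:
  assumes "M \<in> carrier_mat n m" "b \<in> carrier_vec m"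
  shows "rq M a b = (\<Sum>i<n. \<Sum>j<m. a$i * M$$(i,j) * b$j)"
  using assms unfolding rq_def scalar_prod_def
  by (auto simp: atLeast0LessThan sum_distrib_left mult.assoc scalar_prod_def intro!: sum.cong)

lemma qf_parts:
  fixes X :: "complex mat" and S T :: "real mat"
  assumes X: "X \<in> carrier_mat n n" and S: "S \<in> carrier_mat n n" and T: "T \<in> carrier_mat n n"
    and ent: "\<And>i j. i < n \<Longrightarrow> j < n \<Longrightarrow> X$$(i,j) = Complex (S$$(i,j)) (T$$(i,j))"
    and a: "a = vec n (\<lambda>i. Re (v$i))" and b: "b = vec n (\<lambda>i. Im (v$i))"
  shows "Re (\<Sum>i<n. \<Sum>j<n. cnj (v $ i) * X $$ (i,j) * v $ j) = rq S a a + rq S b b - rq T a b + rq T b a"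
    and "Im (\<Sum>i<n. \<Sum>j<n. cnj (v $ i) * X $$ (i,j) * v $ j) = rq T a a + rq T b b + rq S a b - rq S b a"
proof -
  have ca: "a \<in> carrier_vec n" "b \<in> carrier_vec n" using a b by auto
  show "Re (\<Sum>i<n. \<Sum>j<n. cnj (v $ i) * X $$ (i,j) * v $ j) = rq S a a + rq S b b - rq T a b + rq T b a"
    unfolding rq_sum[OF S ca(1)] rq_sum[OF S ca(2)] rq_sum[OF T ca(1)] rq_sum[OF T ca(2)]
    by (simp add: Re_sum ent a b sum.distrib[symmetric] sum_subtractf[symmetric] algebra_simps)
  show "Im (\<Sum>i<n. \<Sum>j<n. cnj (v $ i) * X $$ (i,j) * v $ j) = rq T a a + rq T b b + rq S a b - rq S b a"
    unfolding rq_sum[OF S ca(1)] rq_sum[OF S ca(2)] rq_sum[OF T ca(1)] rq_sum[OF T ca(2)]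
    by (simp add: Im_sum ent a b sum.distrib[symmetric] sum_subtractf[symmetric] algebra_simps)
qed

lemma psd_iff:
  fixes X :: "complex mat" and S T :: "real mat"
  assumes X: "X \<in> carrier_mat n n" and S: "S \<in> carrier_mat n n" and T: "T \<in> carrier_mat n n"
    and ent: "\<And>i j. i < n \<Longrightarrow> j < n \<Longrightarrow> X$$(i,j) = Complex (S$$(i,j)) (T$$(i,j))"
  shows "psd X \<longleftrightarrow> (\<forall>a\<in>carrier_vec n. \<forall>b\<in>carrier_vec n.
      rq T a a + rq T b b + rq S a b - rq S b a = 0 \<and> rq S a a + rq S b b - rq T a b + rq T b a \<ge> 0)"
proof
  assume "psd X"
  then obtain m where m: "X \<in> carrier_mat m m" and H: "\<forall>v \<in> carrier_vec m.
        let q = (\<Sum>i<m. \<Sum>j<m. cnj (v $ i) * X $$ (i,j) * v $ j)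
        in Im q = 0 \<and> Re q \<ge> 0" unfolding psd_def by auto
  have mn: "m = n" using m X by auto
  show "\<forall>a\<in>carrier_vec n. \<forall>b\<in>carrier_vec n.
      rq T a a + rq T b b + rq S a b - rq S b a = 0 \<and> rq S a a + rq S b b - rq T a b + rq T b a \<ge> 0"
  proof (intro ballI)
    fix a b :: "real vec" assume a: "a \<in> carrier_vec n" and b: "b \<in> carrier_vec n"
    define v where "v = vec n (\<lambda>i. Complex (a$i) (b$i))"
    have v: "v \<in> carrier_vec n" unfolding v_def by auto
    have av: "a = vec n (\<lambda>i. Re (v$i))" using a unfolding v_def by auto
    have bv: "b = vec n (\<lambda>i. Im (v$i))" using b unfolding v_def by auto
    from H v mn have "Im (\<Sum>i<n. \<Sum>j<n. cnj (v $ i) * X $$ (i,j) * v $ j) = 0 \<and>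
       Re (\<Sum>i<n. \<Sum>j<n. cnj (v $ i) * X $$ (i,j) * v $ j) \<ge> 0" by (auto simp: Let_def)
    then show "rq T a a + rq T b b + rq S a b - rq S b a = 0 \<and> rq S a a + rq S b b - rq T a b + rq T b a \<ge> 0"
      using qf_parts[OF X S T ent av bv] by auto
  qed
next
  assume H: "\<forall>a\<in>carrier_vec n. \<forall>b\<in>carrier_vec n.
      rq T a a + rq T b b + rq S a b - rq S b a = 0 \<and> rq S a a + rq S b b - rq T a b + rq T b a \<ge> 0"
  show "psd X" unfolding psd_def
  proof (intro exI[of _ n] conjI ballI)
    show "X \<in> carrier_mat n n" by fact
    fix v :: "complex vec" assume v: "v \<in> carrier_vec n"
    define a where "a = vec n (\<lambda>i. Re (v$i))"
    define b where "b = vec n (\<lambda>i. Im (v$i))"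
    have "a \<in> carrier_vec n" "b \<in> carrier_vec n" unfolding a_def b_def by auto
    with H qf_parts[OF X S T ent a_def b_def]
    show "let q = (\<Sum>i<n. \<Sum>j<n. cnj (v $ i) * X $$ (i,j) * v $ j) in Im q = 0 \<and> Re q \<ge> 0"
      by (auto simp: Let_def)
  qed
qed

lemma rq_add:
  assumes "X \<in> carrier_mat n m" "Y \<in> carrier_mat n m" "a \<in> carrier_vec n" "b \<in> carrier_vec m"
  shows "rq (X + Y) a b = rq X a b + rq Y a b"
  using assms unfolding rq_def
  by (simp add: add_mult_distrib_mat_vec[of X n m Y b] scalar_prod_add_distrib[of a n])

lemma rq_minus:
  assumes "X \<in> carrier_mat n m" "Y \<in> carrier_mat n m" "a \<in> carrier_vec n" "b \<in> carrier_vec m"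
  shows "rq (X - Y) a b = rq X a b - rq Y a b"
proof -
  have "rq (X - Y) a b = (\<Sum>i<n. \<Sum>j<m. a$i * (X - Y)$$(i,j) * b$j)"
    using assms by (intro rq_sum) auto
  also have "\<dots> = (\<Sum>i<n. \<Sum>j<m. a$i * X$$(i,j) * b$j) - (\<Sum>i<n. \<Sum>j<m. a$i * Y$$(i,j) * b$j)"
    using assms by (simp add: sum_subtractf[symmetric] algebra_simps)
  also have "\<dots> = rq X a b - rq Y a b" using assms by (simp add: rq_sum)
  finally show ?thesis .
qed

lemma rq_zero: "b \<in> carrier_vec m \<Longrightarrow> rq (0\<^sub>m n m) a b = 0"
  by (subst rq_sum[of _ n m]) auto

lemma rq_mult_right:
  assumes "X \<in> carrier_mat n k" "Y \<in> carrier_mat k m" "b \<in> carrier_vec m"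
  shows "rq (X * Y) a b = rq X a (Y *\<^sub>v b)"
  using assms unfolding rq_def by simp

lemma rq_mult_left:
  assumes "X \<in> carrier_mat n k" "a \<in> carrier_vec n" "w \<in> carrier_vec k"
  shows "rq X a w = (transpose_mat X *\<^sub>v a) \<bullet> w"
  using assms unfolding rq_def by (simp add: transpose_vec_mult_scalar[of X n k w a])

lemma rq_transpose:
  assumes "X \<in> carrier_mat n m" "a \<in> carrier_vec m" "b \<in> carrier_vec n"
  shows "rq (transpose_mat X) a b = rq X b a"
  using assms unfolding rq_def
  by (metis comm_scalar_prod mult_mat_vec_carrier transpose_carrier_mat transpose_vec_mult_scalar)

lemma sum_split_add: "(\<Sum>k<a+b. f k) = (\<Sum>k<a. f k) + (\<Sum>k<b. f (a+k::nat))"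
  by (induction b) (auto simp: add.assoc)

lemma sum_pairs: "(\<Sum>i<2*n. f i) = (\<Sum>k<n. f (2*k) + f (2*k+1::nat))"
  by (induction n) (auto simp: algebra_simps)

definition om :: "nat \<Rightarrow> real vec \<Rightarrow> real vec \<Rightarrow> real" where
  "om n x y = (\<Sum>k<n. x$(2*k) * y$(2*k+1) - x$(2*k+1) * y$(2*k))"

definition J :: "nat \<Rightarrow> real vec \<Rightarrow> real vec" where
  "J n z = vec (2*n) (\<lambda>i. if even i then z$(i+1) else - z$(i-1))"

definition JT :: "nat \<Rightarrow> real vec \<Rightarrow> real vec" where
  "JT n z = vec (2*n) (\<lambda>i. if even i then - z$(i+1) else z$(i-1))"

lemma omega_carrier[simp]: "omega n \<in> carrier_mat (2*n) (2*n)"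
  unfolding omega_def by auto

lemma dim_omega[simp]: "dim_row (omega n) = 2*n" "dim_col (omega n) = 2*n"
  unfolding omega_def by auto

lemma even_lt: "even i \<Longrightarrow> i < 2*n \<Longrightarrow> i+1 < 2*(n::nat)" by presburger

lemma omega_row:
  assumes i: "i < 2*n"
  shows "(\<Sum>j<2*n. omega n $$ (i,j) * z$j) = (if even i then z$(i+1) else - z$(i-1))"
proof (cases "even i")
  case True
  have i1: "i+1 < 2*n" using i True by presburger
  have "(\<Sum>j<2*n. omega n $$ (i,j) * z$j) = (\<Sum>j<2*n. if j = i+1 then z$j else 0)"
    using i True by (intro sum.cong) (auto simp: omega_def)
  also have "\<dots> = z$(i+1)" using i1 by simp
  finally show ?thesis using True by simp
next
  case False
  then have i0: "i \<ge> 1" by presburger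
  have "(\<Sum>j<2*n. omega n $$ (i,j) * z$j) = (\<Sum>j<2*n. if j = i-1 then - z$j else 0)"
    using i False i0 by (intro sum.cong) (auto simp: omega_def)
  also have "\<dots> = - z$(i-1)" using i i0 by simp
  finally show ?thesis using False by simp
qed

lemma omega_col:
  assumes i: "i < 2*n"
  shows "(\<Sum>j<2*n. omega n $$ (j,i) * z$j) = (if even i then - z$(i+1) else z$(i-1))"
proof (cases "even i")
  case True
  have i1: "i+1 < 2*n" using i True by presburger
  have "(\<Sum>j<2*n. omega n $$ (j,i) * z$j) = (\<Sum>j<2*n. if j = i+1 then - z$j else 0)"
    using i i1 True by (intro sum.cong) (auto simp: omega_def)
  also have "\<dots> = - z$(i+1)" using i1 by simp
  finally show ?thesis using True by simp
next
  case False
  then have i0: "i \<ge> 1" by presburger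
  have "(\<Sum>j<2*n. omega n $$ (j,i) * z$j) = (\<Sum>j<2*n. if j = i-1 then z$j else 0)"
    using i False i0 by (intro sum.cong) (auto simp: omega_def)
  also have "\<dots> = z$(i-1)" using i i0 by simp
  finally show ?thesis using False by simp
qed

lemma omega_mult_vec:
  assumes "z \<in> carrier_vec (2*n)"
  shows "omega n *\<^sub>v z = J n z"
proof (rule eq_vecI)
  fix i assume "i < dim_vec (J n z)"
  then have i: "i < 2*n" by (simp add: J_def)
  have "(omega n *\<^sub>v z) $ i = (\<Sum>j<2*n. omega n $$ (i,j) * z$j)"
    using i assms by (simp add: scalar_prod_def atLeast0LessThan)
  then show "(omega n *\<^sub>v z) $ i = J n z $ i" using omega_row[OF i] i by (simp add: J_def)
qed (simp add: J_def)

lemma omegaT_mult_vec: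
  assumes "z \<in> carrier_vec (2*n)"
  shows "transpose_mat (omega n) *\<^sub>v z = JT n z"
proof (rule eq_vecI)
  fix i assume "i < dim_vec (JT n z)"
  then have i: "i < 2*n" by (simp add: JT_def)
  have "(transpose_mat (omega n) *\<^sub>v z) $ i = (\<Sum>j<2*n. omega n $$ (j,i) * z$j)"
    using i assms by (simp add: scalar_prod_def atLeast0LessThan)
  then show "(transpose_mat (omega n) *\<^sub>v z) $ i = JT n z $ i" using omega_col[OF i] i by (simp add: JT_def)
qed (simp add: JT_def)

lemma J_carrier[simp]: "J n z \<in> carrier_vec (2*n)" and JT_carrier[simp]: "JT n z \<in> carrier_vec (2*n)"
  by (auto simp: J_def JT_def)

lemma rq_omega:
  assumes x: "x \<in> carrier_vec (2*n)" and y: "y \<in> carrier_vec (2*n)"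
  shows "rq (omega n) x y = om n x y"
proof -
  have "rq (omega n) x y = (\<Sum>i<2*n. \<Sum>j<2*n. x$i * omega n $$(i,j) * y$j)"
    using y by (intro rq_sum) auto
  also have "\<dots> = (\<Sum>i<2*n. x$i * (if even i then y$(i+1) else - y$(i-1)))"
    by (intro sum.cong refl, subst omega_row[symmetric]) (auto simp: sum_distrib_left mult.assoc)
  also have "\<dots> = om n x y" unfolding sum_pairs om_def by simp
  finally show ?thesis .
qed

lemma om_J: "om n (J n z) (J n w) = om n z w"
  unfolding om_def J_def by (intro sum.cong) auto

lemma om_JT: "om n (JT n z) (JT n w) = om n z w"
  unfolding om_def JT_def by (intro sum.cong) auto

lemma om_self[simp]: "om n x x = 0"
  unfolding om_def by (simp add: mult.commute)

lemma om_antisym: "om n x y = - om n y x"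
  unfolding om_def by (simp add: sum_negf[symmetric] mult.commute)

lemma om_append:
  assumes "x \<in> carrier_vec (2*a)" "x' \<in> carrier_vec (2*a)" "y \<in> carrier_vec (2*b)" "y' \<in> carrier_vec (2*b)"
  shows "om (a+b) (x @\<^sub>v y) (x' @\<^sub>v y') = om a x x' + om b y y'"
  unfolding om_def sum_split_add using assms by simp

lemma J_JT: assumes "z \<in> carrier_vec (2*n)" shows "JT n (J n z) = z"
proof (rule eq_vecI)
  fix i assume "i < dim_vec z"
  then have i: "i < 2*n" using assms by auto
  show "JT n (J n z) $ i = z $ i"
  proof (cases "even i")
    case True with i even_lt[OF True i] show ?thesis by (auto simp: J_def JT_def)
  next
    case False then have "i - 1 + 1 = i" "even (i-1)" by presburger+
    with i False show ?thesis by (auto simp: J_def JT_def)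
  qed
qed (use assms in \<open>auto simp: JT_def\<close>)

lemma JT_J: assumes "z \<in> carrier_vec (2*n)" shows "J n (JT n z) = z"
proof (rule eq_vecI)
  fix i assume "i < dim_vec z"
  then have i: "i < 2*n" using assms by auto
  show "J n (JT n z) $ i = z $ i"
  proof (cases "even i")
    case True with i even_lt[OF True i] show ?thesis by (auto simp: J_def JT_def)
  next
    case False then have "i - 1 + 1 = i" "even (i-1)" by presburger+
    with i False show ?thesis by (auto simp: J_def JT_def)
  qed
qed (use assms in \<open>auto simp: J_def\<close>)

lemma mult_zero_vec: "A \<in> carrier_mat n m \<Longrightarrow> A *\<^sub>v 0\<^sub>v m = (0\<^sub>v n :: real vec)"
  by (rule eq_vecI) (auto simp: scalar_prod_def)

lemma rq_zero_left: "M \<in> carrier_mat n m \<Longrightarrow> b \<in> carrier_vec m \<Longrightarrow> rq M (0\<^sub>v n) b = 0"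
  by (simp add: rq_sum)

lemma rq_zero_right: "M \<in> carrier_mat n m \<Longrightarrow> rq M a (0\<^sub>v m) = 0"
  by (simp add: rq_sum)

lemma rq_mult_left2:
  assumes "X \<in> carrier_mat n k" "Y \<in> carrier_mat k m" "a \<in> carrier_vec n" "b \<in> carrier_vec m"
  shows "rq (X * Y) a b = rq Y (transpose_mat X *\<^sub>v a) b"
  using assms unfolding rq_def by (simp add: transpose_vec_mult_scalar[of X n k _ a])

lemma rq_sandwich:
  assumes "A \<in> carrier_mat n m" "M \<in> carrier_mat n n" "a \<in> carrier_vec m" "b \<in> carrier_vec m"
  shows "rq (transpose_mat A * M * A) a b = rq M (A *\<^sub>v a) (A *\<^sub>v b)"
proof -
  have "rq (transpose_mat A * M * A) a b = rq (transpose_mat A * M) a (A *\<^sub>v b)"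
    using assms by (intro rq_mult_right[of _ m n]) auto
  also have "\<dots> = rq M (A *\<^sub>v a) (A *\<^sub>v b)"
    using assms by (subst rq_mult_left2[of _ m n _ n]) auto
  finally show ?thesis .
qed

lemma gobs_form:
  fixes S K :: "real mat"
  assumes S: "S \<in> carrier_mat m m" and K: "K \<in> carrier_mat (2*n) m"
  shows "psd (cmat S - \<i> \<cdot>\<^sub>m cmat (transpose_mat K * omega n * K)) \<longleftrightarrow>
    (\<forall>g\<in>carrier_vec m. \<forall>h\<in>carrier_vec m. rq S g h = rq S h g \<and>
       rq S g g + rq S h h + om n (K *\<^sub>v g) (K *\<^sub>v h) - om n (K *\<^sub>v h) (K *\<^sub>v g) \<ge> 0)"
proof -
  define W where "W = transpose_mat K * omega n * K"
  have W: "W \<in> carrier_mat m m" unfolding W_def using K by auto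
  define T where "T = 0\<^sub>m m m - W"
  have T: "T \<in> carrier_mat m m" unfolding T_def using W by auto
  have rT: "rq T g h = - om n (K *\<^sub>v g) (K *\<^sub>v h)" if "g \<in> carrier_vec m" "h \<in> carrier_vec m" for g h
  proof -
    have "rq T g h = rq (0\<^sub>m m m) g h - rq W g h" unfolding T_def by (rule rq_minus) (use W that in auto)
    also have "rq W g h = rq (omega n) (K *\<^sub>v g) (K *\<^sub>v h)" unfolding W_def
      by (rule rq_sandwich[OF K]) (use that in auto)
    also have "\<dots> = om n (K *\<^sub>v g) (K *\<^sub>v h)" by (rule rq_omega) (use that K in auto)
    finally show ?thesis using rq_zero that by simp
  qed
  have X: "cmat S - \<i> \<cdot>\<^sub>m cmat W \<in> carrier_mat m m" using S W by (auto simp: cmat_def)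
  have "psd (cmat S - \<i> \<cdot>\<^sub>m cmat W) \<longleftrightarrow> (\<forall>a\<in>carrier_vec m. \<forall>b\<in>carrier_vec m.
      rq T a a + rq T b b + rq S a b - rq S b a = 0 \<and> rq S a a + rq S b b - rq T a b + rq T b a \<ge> 0)"
    by (rule psd_iff[OF X S T]) (use S W in \<open>auto simp: cmat_def T_def complex_eq_iff\<close>)
  also have "\<dots> \<longleftrightarrow> (\<forall>g\<in>carrier_vec m. \<forall>h\<in>carrier_vec m. rq S g h = rq S h g \<and>
       rq S g g + rq S h h + om n (K *\<^sub>v g) (K *\<^sub>v h) - om n (K *\<^sub>v h) (K *\<^sub>v g) \<ge> 0)"
    by (intro ball_cong refl) (simp add: rT)
  finally show ?thesis unfolding W_def .
qed

lemma real_form: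
  fixes L :: "real mat"
  assumes L: "L \<in> carrier_mat m m"
  shows "psd (cmat L) \<longleftrightarrow> (\<forall>g\<in>carrier_vec m. \<forall>h\<in>carrier_vec m. rq L g h = rq L h g \<and>
       rq L g g + rq L h h \<ge> 0)"
proof -
  have X: "cmat L \<in> carrier_mat m m" using L by (auto simp: cmat_def)
  have Z: "0\<^sub>m m m \<in> carrier_mat m m" by auto
  show ?thesis
    by (subst psd_iff[OF X L Z]) (use L in \<open>auto simp: cmat_def complex_eq_iff rq_zero\<close>)
qed

definition Pc :: "nat \<Rightarrow> real mat \<Rightarrow> real mat \<Rightarrow> bool" where
  "Pc N A B \<longleftrightarrow> psd (cmat B - \<i> \<cdot>\<^sub>m cmat (transpose_mat A * omega N * A))"

lemma chan_sym:
  assumes ch: "gaussian_channel N N' A B c"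
  shows "\<forall>a\<in>carrier_vec (2*N'). \<forall>b\<in>carrier_vec (2*N'). rq B a b = rq B b a"
proof -
  have A: "A \<in> carrier_mat (2*N) (2*N')" and B: "B \<in> carrier_mat (2*N') (2*N')"
    and P: "psd (cmat B + \<i> \<cdot>\<^sub>m cmat (omega N') - \<i> \<cdot>\<^sub>m cmat (transpose_mat A * omega N * A))"
    using ch unfolding gaussian_channel_def by auto
  define W where "W = transpose_mat A * omega N * A"
  have W: "W \<in> carrier_mat (2*N') (2*N')" unfolding W_def using A by auto
  define T where "T = omega N' - W"
  have T: "T \<in> carrier_mat (2*N') (2*N')" unfolding T_def using W by auto
  have rT: "rq T g g = 0" if "g \<in> carrier_vec (2*N')" for g
  proof -
    have h1: "rq T g g = rq (omega N') g g - rq W g g" unfolding T_def by (rule rq_minus) (use W that in auto)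
    have h2: "rq W g g = rq (omega N) (A *\<^sub>v g) (A *\<^sub>v g)" unfolding W_def
      by (rule rq_sandwich[OF A]) (use that in auto)
    have h3: "rq (omega N) (A *\<^sub>v g) (A *\<^sub>v g) = om N (A *\<^sub>v g) (A *\<^sub>v g)" by (rule rq_omega) (use that A in auto)
    have h4: "rq (omega N') g g = om N' g g" by (rule rq_omega) (use that in auto)
    show ?thesis using h1 h2 h3 h4 by simp
  qed
  have X: "cmat B + \<i> \<cdot>\<^sub>m cmat (omega N') - \<i> \<cdot>\<^sub>m cmat W \<in> carrier_mat (2*N') (2*N')"
    using B W by (auto simp: cmat_def)
  have "psd (cmat B + \<i> \<cdot>\<^sub>m cmat (omega N') - \<i> \<cdot>\<^sub>m cmat W) \<longleftrightarrow> (\<forall>a\<in>carrier_vec (2*N'). \<forall>b\<in>carrier_vec (2*N').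
      rq T a a + rq T b b + rq B a b - rq B b a = 0 \<and> rq B a a + rq B b b - rq T a b + rq T b a \<ge> 0)"
    by (rule psd_iff[OF X B T]) (use B W in \<open>auto simp: cmat_def T_def complex_eq_iff\<close>)
  with P show ?thesis unfolding W_def[symmetric] by (auto simp: rT)
qed

lemma P_to_IB:
  assumes ch: "gaussian_channel N N' A B c" and N': "N' \<ge> 1" and P: "Pc N A B"
  shows "gaussian_incompatibility_breaking N N' A B c"
proof -
  have A: "A \<in> carrier_mat (2*N) (2*N')" and B: "B \<in> carrier_mat (2*N') (2*N')"
    and c: "c \<in> carrier_vec (2*N')"
    using ch unfolding gaussian_channel_def by auto
  define G where "G = (A, B, 0\<^sub>v (2*N') :: real vec)"
  have G: "gaussian_obs N G" unfolding G_def gaussian_obs_def using A B N' P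
    by (auto simp: Pc_def)
  show ?thesis unfolding gaussian_incompatibility_breaking_def gaussian_compatible_def
  proof (rule exI[of _ G], intro conjI G ballI)
    fix E assume "E \<in> channel_obs A B c ` {E. gaussian_obs N' E}"
    then obtain K L m where E0: "gaussian_obs N' (K, L, m)" and E: "E = channel_obs A B c (K, L, m)"
      by auto
    define M where "M = dim_col K"
    have K: "K \<in> carrier_mat (2*N') M" and L: "L \<in> carrier_mat M M" and m: "m \<in> carrier_vec M"
      and PL: "psd (cmat L - \<i> \<cdot>\<^sub>m cmat (transpose_mat K * omega N' * K))"
      using E0 unfolding gaussian_obs_def M_def by (auto simp: Let_def)
    have PL2: "psd (cmat L)"
    proof (subst real_form[OF L], intro ballI conjI)
      fix g h :: "real vec" assume g: "g \<in> carrier_vec M" and h: "h \<in> carrier_vec M"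
      note F = PL[unfolded gobs_form[OF L K]]
      show "rq L g h = rq L h g" using F g h by auto
      have Z: "0\<^sub>v M \<in> carrier_vec M" by simp
      have "rq L g g \<ge> 0" using F[rule_format, OF g Z] K L g
        by (simp add: mult_zero_vec[OF K] rq_zero_left[OF L] rq_zero_right[OF L] om_def)
      moreover have "rq L h h \<ge> 0" using F[rule_format, OF h Z] K L h
        by (simp add: mult_zero_vec[OF K] rq_zero_left[OF L] rq_zero_right[OF L] om_def)
      ultimately show "rq L g g + rq L h h \<ge> 0" by simp
    qed
    define f where "f = (K, L, m + transpose_mat K *\<^sub>v c)"
    have outG: "outdim G = 2*N'" unfolding G_def outdim_def using A by auto
    have outE: "outdim E = M" unfolding E outdim_def channel_obs_def M_def using A K by auto
    show "\<exists>f. gaussian_postproc (outdim G) (outdim E) f \<and> obtained_via E G f"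
    proof -
      have X1: "gaussian_postproc (outdim G) (outdim E) f"
        unfolding outG outE f_def gaussian_postproc_def using K L m c PL2 by auto
      have "L + transpose_mat K * B * K = transpose_mat K * B * K + L"
        using K B L by (intro comm_add_mat[of _ M M]) auto
      moreover have "transpose_mat K *\<^sub>v 0\<^sub>v (2 * N') + (m + transpose_mat K *\<^sub>v c) = m + transpose_mat K *\<^sub>v c"
        using K m c by (subst mult_zero_vec[of _ M]) auto
      ultimately have X2: "obtained_via E G f"
        unfolding obtained_via_def E G_def f_def postprocess_def channel_obs_def by simp
      show ?thesis using X1 X2 by blast
    qed
  qed
qed

lemma om_smult:
  assumes "a \<in> carrier_vec (2*n)" "b \<in> carrier_vec (2*n)"
  shows "om n (s \<cdot>\<^sub>v a) (t \<cdot>\<^sub>v b) = s * t * om n a b"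
proof -
  have "\<And>k. k < n \<Longrightarrow> 2*k < 2*n \<and> 2*k+1 < 2*n" by auto
  then show ?thesis using assms unfolding om_def
    by (auto simp: sum_distrib_left algebra_simps intro!: sum.cong)
qed

definition colm :: "nat \<Rightarrow> real vec \<Rightarrow> real mat" where
  "colm n a = mat n 1 (\<lambda>(i,j). a$i)"

lemma colm_carrier[simp]: "colm n a \<in> carrier_mat n 1"
  unfolding colm_def by auto

lemma dim_colm[simp]: "dim_row (colm n a) = n" "dim_col (colm n a) = 1"
  unfolding colm_def by auto

lemma colm_mult:
  assumes "a \<in> carrier_vec n" "x \<in> carrier_vec 1"
  shows "colm n a *\<^sub>v x = (x$0) \<cdot>\<^sub>v a"
  using assms by (intro eq_vecI) (auto simp: colm_def scalar_prod_def)

definition e1 :: "real vec" where "e1 = vec 1 (\<lambda>_. 1)"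

lemma e1_carrier[simp]: "e1 \<in> carrier_vec 1" unfolding e1_def by auto
lemma e1_carrier'[simp]: "e1 \<in> carrier_vec (Suc 0)" unfolding e1_def by auto

lemma IB_to_P:
  assumes ch: "gaussian_channel N N' A B c" and IB: "gaussian_incompatibility_breaking N N' A B c"
  shows "Pc N A B"
proof -
  have A: "A \<in> carrier_mat (2*N) (2*N')" and B: "B \<in> carrier_mat (2*N') (2*N')"
    and c: "c \<in> carrier_vec (2*N')"
    using ch unfolding gaussian_channel_def by auto
  obtain G where G: "gaussian_obs N G" and comp: "\<forall>E\<in>channel_obs A B c ` {E. gaussian_obs N' E}.
      \<exists>f. gaussian_postproc (outdim G) (outdim E) f \<and> obtained_via E G f"
    using IB unfolding gaussian_incompatibility_breaking_def gaussian_compatible_def by auto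
  obtain KG LG mG where Gd: "G = (KG, LG, mG)" by (cases G) auto
  define MG where "MG = dim_col KG"
  have KG: "KG \<in> carrier_mat (2*N) MG" and LG: "LG \<in> carrier_mat MG MG"
    and PG: "psd (cmat LG - \<i> \<cdot>\<^sub>m cmat (transpose_mat KG * omega N * KG))"
    using G unfolding gaussian_obs_def Gd MG_def by (auto simp: Let_def)
  note FG = PG[unfolded gobs_form[OF LG KG]]
  have key: "\<exists>g\<in>carrier_vec MG. A *\<^sub>v a = KG *\<^sub>v g \<and> rq LG g g \<le> rq B a a"
    if a: "a \<in> carrier_vec (2*N')" for a
  proof -
    define Ea where "Ea = (colm (2*N') a, 0\<^sub>m 1 1 :: real mat, 0\<^sub>v 1 :: real vec)"
    have Z1: "(0\<^sub>m 1 1 :: real mat) \<in> carrier_mat 1 1" by simp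
    have "gaussian_obs N' Ea" 
    proof (simp only: Ea_def gaussian_obs_def Let_def prod.case, intro conjI)
      show "psd (cmat (0\<^sub>m 1 1) - \<i> \<cdot>\<^sub>m cmat (transpose_mat (colm (2 * N') a) * omega N' * colm (2 * N') a))"
        using a by (subst gobs_form[OF Z1]) (auto simp: rq_zero colm_mult om_smult)
    qed (auto simp: colm_def)
    then have "channel_obs A B c Ea \<in> channel_obs A B c ` {E. gaussian_obs N' E}" by auto
    with comp obtain f where pp: "gaussian_postproc (outdim G) (outdim (channel_obs A B c Ea)) f"
      and ov: "obtained_via (channel_obs A B c Ea) G f" by blast
    obtain A' B' c' where fd: "f = (A', B', c')" by (cases f) auto
    have outG: "outdim G = MG" unfolding Gd outdim_def MG_def by simp
    have outE: "outdim (channel_obs A B c Ea) = 1" unfolding Ea_def outdim_def channel_obs_def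
      using A by (simp add: colm_def)
    have A': "A' \<in> carrier_mat MG 1" and B': "B' \<in> carrier_mat 1 1" and PB': "psd (cmat B')"
      using pp unfolding fd outG outE gaussian_postproc_def by auto
    have eq1: "A * colm (2*N') a = KG * A'"
      and eq2: "0\<^sub>m 1 1 + transpose_mat (colm (2*N') a) * B * colm (2*N') a = transpose_mat A' * LG * A' + B'"
      using ov unfolding obtained_via_def fd Gd Ea_def channel_obs_def postprocess_def by auto
    define g where "g = A' *\<^sub>v e1"
    have g: "g \<in> carrier_vec MG" unfolding g_def by (rule mult_mat_vec_carrier[OF A' e1_carrier])
    have Ka: "colm (2*N') a *\<^sub>v e1 = a" using a by (simp add: colm_mult e1_def)
    have "(A * colm (2*N') a) *\<^sub>v e1 = A *\<^sub>v a"
      by (subst assoc_mult_mat_vec[OF A colm_carrier e1_carrier]) (simp add: Ka)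
    then have "A *\<^sub>v a = (A * colm (2*N') a) *\<^sub>v e1" by simp
    also have "\<dots> = KG *\<^sub>v g" unfolding eq1 g_def using assoc_mult_mat_vec[OF KG A' e1_carrier] .
    finally have ag: "A *\<^sub>v a = KG *\<^sub>v g" .
    have C1: "colm (2*N') a \<in> carrier_mat (2*N') 1" by (rule colm_carrier)
    have "rq (0\<^sub>m 1 1 + transpose_mat (colm (2*N') a) * B * colm (2*N') a) e1 e1
       = rq (0\<^sub>m 1 1) e1 e1 + rq (transpose_mat (colm (2*N') a) * B * colm (2*N') a) e1 e1"
      by (rule rq_add) (use B in auto)
    also have "rq (transpose_mat (colm (2*N') a) * B * colm (2*N') a) e1 e1 = rq B a a"
      using rq_sandwich[OF C1 B e1_carrier e1_carrier] Ka by simp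
    finally have R1: "rq (0\<^sub>m 1 1 + transpose_mat (colm (2*N') a) * B * colm (2*N') a) e1 e1 = rq B a a"
      using rq_zero[OF e1_carrier] by simp
    have "rq (transpose_mat A' * LG * A' + B') e1 e1 = rq (transpose_mat A' * LG * A') e1 e1 + rq B' e1 e1"
      by (rule rq_add) (use A' LG B' in auto)
    also have "rq (transpose_mat A' * LG * A') e1 e1 = rq LG g g"
      using rq_sandwich[OF A' LG e1_carrier e1_carrier] g_def by simp
    finally have R2: "rq (transpose_mat A' * LG * A' + B') e1 e1 = rq LG g g + rq B' e1 e1" .
    note R1 R2
    have z: "rq B' (0\<^sub>v 1) (0\<^sub>v 1) = 0" by (rule rq_zero_right[OF B'])
    have "0 \<le> rq B' e1 e1 + rq B' (0\<^sub>v 1) (0\<^sub>v 1)"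
      using PB'[unfolded real_form[OF B'], rule_format, of e1 "0\<^sub>v 1"] by auto
    then have "rq B' e1 e1 \<ge> 0" using z by linarith
    then show ?thesis using eq2 g ag R1 R2 by auto
  qed
  show ?thesis unfolding Pc_def gobs_form[OF B A]
  proof (intro ballI conjI)
    fix a b :: "real vec" assume a: "a \<in> carrier_vec (2*N')" and b: "b \<in> carrier_vec (2*N')"
    show "rq B a b = rq B b a" using chan_sym[OF ch] a b by auto
    obtain g where g: "g \<in> carrier_vec MG" "A *\<^sub>v a = KG *\<^sub>v g" "rq LG g g \<le> rq B a a" using key[OF a] by auto
    obtain h where h: "h \<in> carrier_vec MG" "A *\<^sub>v b = KG *\<^sub>v h" "rq LG h h \<le> rq B b b" using key[OF b] by auto
    have "0 \<le> rq LG g g + rq LG h h + om N (KG *\<^sub>v g) (KG *\<^sub>v h) - om N (KG *\<^sub>v h) (KG *\<^sub>v g)"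
      using FG g(1) h(1) by auto
    then show "0 \<le> rq B a a + rq B b b + om N (A *\<^sub>v a) (A *\<^sub>v b) - om N (A *\<^sub>v b) (A *\<^sub>v a)"
      using g h by auto
  qed
qed

lemma dsum_carrier[simp]: "P \<in> carrier_mat n1 m1 \<Longrightarrow> Q \<in> carrier_mat n2 m2 \<Longrightarrow>
   dsum P Q \<in> carrier_mat (n1+n2) (m1+m2)"
  unfolding dsum_def by auto

lemma zero_mat_mult_vec: "y \<in> carrier_vec m \<Longrightarrow> 0\<^sub>m n m *\<^sub>v y = (0\<^sub>v n :: real vec)"
  by (rule eq_vecI) (auto simp: scalar_prod_def)

lemma dim_J[simp]: "dim_vec (J n z) = 2*n" "dim_vec (JT n z) = 2*n"
  by (auto simp: J_def JT_def)

lemma dsum_mult_vec: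
  assumes P: "P \<in> carrier_mat n1 m1" and Q: "Q \<in> carrier_mat n2 m2"
    and y1: "y1 \<in> carrier_vec m1" and y2: "y2 \<in> carrier_vec m2"
  shows "dsum P Q *\<^sub>v (y1 @\<^sub>v y2) = (P *\<^sub>v y1) @\<^sub>v (Q *\<^sub>v y2)"
proof -
  have Z1: "0\<^sub>m n1 m2 \<in> carrier_mat n1 m2" and Z2: "0\<^sub>m n2 m1 \<in> carrier_mat n2 m1" by auto
  have "dsum P Q = four_block_mat P (0\<^sub>m n1 m2) (0\<^sub>m n2 m1) Q" unfolding dsum_def using P Q by auto
  then show ?thesis using four_block_mat_mult_vec[OF P Z1 Z2 Q y1 y2] P Q y1 y2
    by (simp add: zero_mat_mult_vec)
qed

lemma rq_dsum:
  assumes P: "P \<in> carrier_mat n1 m1" and Q: "Q \<in> carrier_mat n2 m2"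
    and x1: "x1 \<in> carrier_vec n1" and x2: "x2 \<in> carrier_vec n2"
    and y1: "y1 \<in> carrier_vec m1" and y2: "y2 \<in> carrier_vec m2"
  shows "rq (dsum P Q) (x1 @\<^sub>v x2) (y1 @\<^sub>v y2) = rq P x1 y1 + rq Q x2 y2"
  unfolding rq_def dsum_mult_vec[OF P Q y1 y2]
  by (rule scalar_prod_append) (use P Q x1 x2 y1 y2 in auto)

lemma J_append:
  assumes x1: "x1 \<in> carrier_vec (2*a)" and x2: "x2 \<in> carrier_vec (2*b)"
  shows "J (a+b) (x1 @\<^sub>v x2) = J a x1 @\<^sub>v J b x2"
proof (rule eq_vecI)
  fix i assume "i < dim_vec (J a x1 @\<^sub>v J b x2)"
  then have i: "i < 2*a + 2*b" by simp
  show "J (a+b) (x1 @\<^sub>v x2) $ i = (J a x1 @\<^sub>v J b x2) $ i"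
  proof (cases "i < 2*a")
    case True
    then show ?thesis using x1 x2 i even_lt[of i a] by (auto simp: J_def)
  next
    case False
    have e: "even (i - 2*a) = even i" using False by presburger
    have "i + 1 - 2*a = i - 2*a + 1" using False by auto
    moreover have "odd i \<Longrightarrow> i - 1 - 2*a = i - 2*a - 1" using False by auto
    moreover have "odd i \<Longrightarrow> \<not> (i - 1 < 2*a)" using False by presburger
    moreover have "even i \<Longrightarrow> i + 1 < 2*a + 2*b" using i by presburger
    ultimately show ?thesis using x1 x2 i False e by (auto simp: J_def algebra_simps)
  qed
qed (simp add: J_def)

lemma JT_append:
  assumes x1: "x1 \<in> carrier_vec (2*a)" and x2: "x2 \<in> carrier_vec (2*b)"
  shows "JT (a+b) (x1 @\<^sub>v x2) = JT a x1 @\<^sub>v JT b x2"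
proof (rule eq_vecI)
  fix i assume "i < dim_vec (JT a x1 @\<^sub>v JT b x2)"
  then have i: "i < 2*a + 2*b" by simp
  show "JT (a+b) (x1 @\<^sub>v x2) $ i = (JT a x1 @\<^sub>v JT b x2) $ i"
  proof (cases "i < 2*a")
    case True
    then show ?thesis using x1 x2 i even_lt[of i a] by (auto simp: JT_def)
  next
    case False
    have e: "even (i - 2*a) = even i" using False by presburger
    have "i + 1 - 2*a = i - 2*a + 1" using False by auto
    moreover have "odd i \<Longrightarrow> i - 1 - 2*a = i - 2*a - 1" using False by auto
    moreover have "odd i \<Longrightarrow> \<not> (i - 1 < 2*a)" using False by presburger
    moreover have "even i \<Longrightarrow> i + 1 < 2*a + 2*b" using i by presburger
    ultimately show ?thesis using x1 x2 i False e by (auto simp: JT_def algebra_simps)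
  qed
qed (simp add: JT_def)

lemma omega_carrier2: "omega (a+b) \<in> carrier_mat (2*a+2*b) (2*a+2*b)"
  using omega_carrier[of "a+b"] by (simp add: distrib_left)

lemma channel_cov_rq:
  assumes A: "A \<in> carrier_mat (2*N) (2*N')" and B: "B \<in> carrier_mat (2*N') (2*N')"
    and V0: "V0 \<in> carrier_mat (2*N+2*M) (2*N+2*M)"
    and xA: "xA \<in> carrier_vec (2*N')" and xB: "xB \<in> carrier_vec (2*M)"
    and yA: "yA \<in> carrier_vec (2*N')" and yB: "yB \<in> carrier_vec (2*M)"
  shows "rq (channel_cov N N' M A B V0) (xA @\<^sub>v xB) (yA @\<^sub>v yB) =
     rq V0 (J N (A *\<^sub>v JT N' xA) @\<^sub>v xB) (J N (A *\<^sub>v JT N' yA) @\<^sub>v yB) + rq B (JT N' xA) (JT N' yA)"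
proof -
  define no where "no = 2*N'+2*M"
  define ni where "ni = 2*N+2*M"
  have Oo: "omega (N'+M) \<in> carrier_mat no no" unfolding no_def by (rule omega_carrier2)
  have Oi: "omega (N+M) \<in> carrier_mat ni ni" unfolding ni_def by (rule omega_carrier2)
  have OoT: "transpose_mat (omega (N'+M)) \<in> carrier_mat no no" using Oo by auto
  have OiT: "transpose_mat (omega (N+M)) \<in> carrier_mat ni ni" using Oi by auto
  define D1 where "D1 = dsum A (1\<^sub>m (2*M))"
  have D1: "D1 \<in> carrier_mat ni no" unfolding D1_def ni_def no_def using A by (intro dsum_carrier) auto
  have D1T: "transpose_mat D1 \<in> carrier_mat no ni" using D1 by auto
  have V0': "V0 \<in> carrier_mat ni ni" using V0 unfolding ni_def .
  define DB where "DB = dsum B (0\<^sub>m (2*M) (2*M))"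
  have DB: "DB \<in> carrier_mat no no" unfolding DB_def no_def using B by (intro dsum_carrier) auto
  define X where "X = omega (N'+M) * transpose_mat D1 * transpose_mat (omega (N+M))"
  have X: "X \<in> carrier_mat no ni" unfolding X_def using Oo D1T OiT by auto
  have XT: "transpose_mat X = omega (N+M) * D1 * transpose_mat (omega (N'+M))"
    unfolding X_def using Oo D1T OiT Oi D1
    by (simp add: transpose_mult[of _ no ni _ ni] transpose_mult[of _ no no _ ni])
  define pm where "pm z = omega (N+M) *\<^sub>v (D1 *\<^sub>v (transpose_mat (omega (N'+M)) *\<^sub>v z))" for z
  have x: "xA @\<^sub>v xB \<in> carrier_vec no" and y: "yA @\<^sub>v yB \<in> carrier_vec no"
    unfolding no_def using xA xB yA yB by auto
  have pmc: "pm z \<in> carrier_vec ni" for z unfolding pm_def carrier_vec_def ni_def by simp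
  have XTv: "transpose_mat X *\<^sub>v z = pm z" if "z \<in> carrier_vec no" for z
  proof -
    have OD: "omega (N+M) * D1 \<in> carrier_mat ni no" using Oi D1 by auto
    have "(omega (N+M) * D1 * transpose_mat (omega (N'+M))) *\<^sub>v z
       = (omega (N+M) * D1) *\<^sub>v (transpose_mat (omega (N'+M)) *\<^sub>v z)"
      by (rule assoc_mult_mat_vec[OF OD OoT that])
    also have "\<dots> = omega (N+M) *\<^sub>v (D1 *\<^sub>v (transpose_mat (omega (N'+M)) *\<^sub>v z))"
      by (rule assoc_mult_mat_vec[OF Oi D1]) (use OoT that in auto)
    finally show ?thesis unfolding XT pm_def .
  qed
  have t1: "rq (X * V0 * omega (N+M) * D1 * transpose_mat (omega (N'+M))) a b = rq V0 (pm a) (pm b)"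
    if a: "a \<in> carrier_vec no" and b: "b \<in> carrier_vec no" for a b
  proof -
    have "rq (X * V0 * omega (N+M) * D1 * transpose_mat (omega (N'+M))) a b
        = rq (X * V0 * omega (N+M) * D1) a (transpose_mat (omega (N'+M)) *\<^sub>v b)"
      by (rule rq_mult_right[of _ no no]) (use X V0' Oi D1 OoT b in auto)
    also have "\<dots> = rq (X * V0 * omega (N+M)) a (D1 *\<^sub>v (transpose_mat (omega (N'+M)) *\<^sub>v b))"
      by (rule rq_mult_right[of _ no ni]) (use X V0' Oi D1 OoT b in auto)
    also have "\<dots> = rq (X * V0) a (pm b)" unfolding pm_def
      by (rule rq_mult_right[of _ no ni]) (use X V0' Oi D1 OoT b in auto)
    also have "\<dots> = rq V0 (transpose_mat X *\<^sub>v a) (pm b)"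
      by (rule rq_mult_left2[of _ no ni _ ni]) (use X V0' a pmc in auto)
    finally show ?thesis using XTv[OF a] by simp
  qed
  have t2: "rq (omega (N'+M) * DB * transpose_mat (omega (N'+M))) a b
      = rq DB (transpose_mat (omega (N'+M)) *\<^sub>v a) (transpose_mat (omega (N'+M)) *\<^sub>v b)"
    if a: "a \<in> carrier_vec no" and b: "b \<in> carrier_vec no" for a b
    using rq_sandwich[OF OoT DB a b] by simp
  have cc: "channel_cov N N' M A B V0 = X * V0 * omega (N+M) * D1 * transpose_mat (omega (N'+M))
      + omega (N'+M) * DB * transpose_mat (omega (N'+M))"
    unfolding channel_cov_def X_def D1_def DB_def by simp
  have split: "rq (channel_cov N N' M A B V0) (xA @\<^sub>v xB) (yA @\<^sub>v yB) =
     rq V0 (pm (xA @\<^sub>v xB)) (pm (yA @\<^sub>v yB)) +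
     rq DB (transpose_mat (omega (N'+M)) *\<^sub>v (xA @\<^sub>v xB)) (transpose_mat (omega (N'+M)) *\<^sub>v (yA @\<^sub>v yB))"
  proof -
    have c1: "X * V0 * omega (N+M) * D1 * transpose_mat (omega (N'+M)) \<in> carrier_mat no no"
      using X V0' Oi D1 OoT by (metis mult_carrier_mat)
    have c2: "omega (N'+M) * DB * transpose_mat (omega (N'+M)) \<in> carrier_mat no no"
      using Oo DB OoT by (metis mult_carrier_mat)
    show ?thesis unfolding cc rq_add[OF c1 c2 x y] t1[OF x y] t2[OF x y] ..
  qed
  have OT: "transpose_mat (omega (N'+M)) *\<^sub>v (z1 @\<^sub>v z2) = JT N' z1 @\<^sub>v JT M z2"
    if "z1 \<in> carrier_vec (2*N')" "z2 \<in> carrier_vec (2*M)" for z1 z2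
  proof -
    have "z1 @\<^sub>v z2 \<in> carrier_vec (2*(N'+M))" using that by (simp add: distrib_left)
    then show ?thesis using omegaT_mult_vec JT_append that by metis
  qed
  have pmv: "pm (z1 @\<^sub>v z2) = J N (A *\<^sub>v JT N' z1) @\<^sub>v z2"
    if z1: "z1 \<in> carrier_vec (2*N')" and z2: "z2 \<in> carrier_vec (2*M)" for z1 z2
  proof -
    have "D1 *\<^sub>v (JT N' z1 @\<^sub>v JT M z2) = (A *\<^sub>v JT N' z1) @\<^sub>v JT M z2"
      unfolding D1_def using dsum_mult_vec[OF A one_carrier_mat JT_carrier JT_carrier]
      by simp
    moreover have "(A *\<^sub>v JT N' z1) @\<^sub>v JT M z2 \<in> carrier_vec (2*(N+M))"
      using A by (simp add: distrib_left)
    moreover have "omega (N+M) *\<^sub>v ((A *\<^sub>v JT N' z1) @\<^sub>v JT M z2) = J N (A *\<^sub>v JT N' z1) @\<^sub>v J M (JT M z2)"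
      using omega_mult_vec[OF calculation(2)] J_append[of "A *\<^sub>v JT N' z1" N "JT M z2" M] A by simp
    ultimately show ?thesis unfolding pm_def OT[OF z1 z2] using JT_J[OF z2] by simp
  qed
  have "rq DB (JT N' xA @\<^sub>v JT M xB) (JT N' yA @\<^sub>v JT M yB) = rq B (JT N' xA) (JT N' yA)"
    unfolding DB_def using rq_dsum[OF B zero_carrier_mat JT_carrier JT_carrier JT_carrier JT_carrier]
    by (simp add: rq_zero)
  then show ?thesis unfolding split pmv[OF xA xB] pmv[OF yA yB] OT[OF xA xB] OT[OF yA yB] by simp
qed

lemma split_vec:
  assumes "x \<in> carrier_vec (n+m)"
  obtains x1 x2 where "x1 \<in> carrier_vec n" "x2 \<in> carrier_vec m" "x = x1 @\<^sub>v x2"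
  using vec_first_last_append[OF assms] vec_first_carrier vec_last_carrier by metis

lemma steer_form:
  assumes V: "V \<in> carrier_mat (2*N'+2*M) (2*N'+2*M)"
  shows "non_steerable N' M V \<longleftrightarrow>
    (\<forall>xA\<in>carrier_vec (2*N'). \<forall>xB\<in>carrier_vec (2*M). \<forall>yA\<in>carrier_vec (2*N'). \<forall>yB\<in>carrier_vec (2*M).
      rq V (xA @\<^sub>v xB) (yA @\<^sub>v yB) = rq V (yA @\<^sub>v yB) (xA @\<^sub>v xB) \<and>
      rq V (xA @\<^sub>v xB) (xA @\<^sub>v xB) + rq V (yA @\<^sub>v yB) (yA @\<^sub>v yB) - om M xB yB + om M yB xB \<ge> 0)"
proof -
  define n where "n = 2*N'+2*M"
  define T where "T = dsum (0\<^sub>m (2*N') (2*N')) (omega M)"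
  have T: "T \<in> carrier_mat n n" unfolding T_def n_def by (intro dsum_carrier) auto
  have V': "V \<in> carrier_mat n n" using V unfolding n_def .
  have X: "cmat V + \<i> \<cdot>\<^sub>m cmat T \<in> carrier_mat n n" using V' T by (auto simp: cmat_def)
  have rT: "rq T (xA @\<^sub>v xB) (yA @\<^sub>v yB) = om M xB yB"
    if "xA \<in> carrier_vec (2*N')" "xB \<in> carrier_vec (2*M)" "yA \<in> carrier_vec (2*N')" "yB \<in> carrier_vec (2*M)"
    for xA xB yA yB :: "real vec"
    unfolding T_def using rq_dsum[OF zero_carrier_mat omega_carrier that(1,2,3,4)] rq_omega[OF that(2,4)]
    by (simp add: rq_zero that)
  have "non_steerable N' M V \<longleftrightarrow> (\<forall>a\<in>carrier_vec n. \<forall>b\<in>carrier_vec n.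
      rq T a a + rq T b b + rq V a b - rq V b a = 0 \<and> rq V a a + rq V b b - rq T a b + rq T b a \<ge> 0)"
    unfolding non_steerable_def T_def[symmetric]
    by (rule psd_iff[OF X V' T]) (use V' T in \<open>auto simp: cmat_def complex_eq_iff\<close>)
  also have "\<dots> \<longleftrightarrow> (\<forall>xA\<in>carrier_vec (2*N'). \<forall>xB\<in>carrier_vec (2*M). \<forall>yA\<in>carrier_vec (2*N'). \<forall>yB\<in>carrier_vec (2*M).
      rq V (xA @\<^sub>v xB) (yA @\<^sub>v yB) = rq V (yA @\<^sub>v yB) (xA @\<^sub>v xB) \<and>
      rq V (xA @\<^sub>v xB) (xA @\<^sub>v xB) + rq V (yA @\<^sub>v yB) (yA @\<^sub>v yB) - om M xB yB + om M yB xB \<ge> 0)"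
  proof (intro iffI ballI)
    fix xA xB yA yB :: "real vec" assume H: "\<forall>a\<in>carrier_vec n. \<forall>b\<in>carrier_vec n.
      rq T a a + rq T b b + rq V a b - rq V b a = 0 \<and> rq V a a + rq V b b - rq T a b + rq T b a \<ge> 0"
      and c: "xA \<in> carrier_vec (2*N')" "xB \<in> carrier_vec (2*M)" "yA \<in> carrier_vec (2*N')" "yB \<in> carrier_vec (2*M)"
    have "xA @\<^sub>v xB \<in> carrier_vec n" "yA @\<^sub>v yB \<in> carrier_vec n" using c unfolding n_def by auto
    from H[rule_format, OF this] show "rq V (xA @\<^sub>v xB) (yA @\<^sub>v yB) = rq V (yA @\<^sub>v yB) (xA @\<^sub>v xB) \<and>
      rq V (xA @\<^sub>v xB) (xA @\<^sub>v xB) + rq V (yA @\<^sub>v yB) (yA @\<^sub>v yB) - om M xB yB + om M yB xB \<ge> 0"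
      using rT[OF c(1,2,1,2)] rT[OF c(3,4,3,4)] rT[OF c] rT[OF c(3,4,1,2)] by auto
  next
    fix a b :: "real vec" assume H: "\<forall>xA\<in>carrier_vec (2*N'). \<forall>xB\<in>carrier_vec (2*M). \<forall>yA\<in>carrier_vec (2*N'). \<forall>yB\<in>carrier_vec (2*M).
      rq V (xA @\<^sub>v xB) (yA @\<^sub>v yB) = rq V (yA @\<^sub>v yB) (xA @\<^sub>v xB) \<and>
      rq V (xA @\<^sub>v xB) (xA @\<^sub>v xB) + rq V (yA @\<^sub>v yB) (yA @\<^sub>v yB) - om M xB yB + om M yB xB \<ge> 0"
      and a: "a \<in> carrier_vec n" and b: "b \<in> carrier_vec n"
    obtain xA xB where x: "xA \<in> carrier_vec (2*N')" "xB \<in> carrier_vec (2*M)" "a = xA @\<^sub>v xB"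
      using split_vec a unfolding n_def by metis
    obtain yA yB where y: "yA \<in> carrier_vec (2*N')" "yB \<in> carrier_vec (2*M)" "b = yA @\<^sub>v yB"
      using split_vec b unfolding n_def by metis
    show "rq T a a + rq T b b + rq V a b - rq V b a = 0 \<and> rq V a a + rq V b b - rq T a b + rq T b a \<ge> 0"
      using H[rule_format, OF x(1,2) y(1,2)] rT[OF x(1,2) x(1,2)] rT[OF y(1,2) y(1,2)] rT[OF x(1,2) y(1,2)]
        rT[OF y(1,2) x(1,2)] x(3) y(3) by auto
  qed
  finally show ?thesis .
qed

lemma cov_form:
  assumes "gaussian_cov n V"
  shows "V \<in> carrier_mat (2*n) (2*n)" and "\<forall>a\<in>carrier_vec (2*n). \<forall>b\<in>carrier_vec (2*n).
      rq V a b = rq V b a \<and> rq V a a + rq V b b - om n a b + om n b a \<ge> 0"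
proof -
  show V: "V \<in> carrier_mat (2*n) (2*n)" using assms unfolding gaussian_cov_def by auto
  have X: "cmat V + \<i> \<cdot>\<^sub>m cmat (omega n) \<in> carrier_mat (2*n) (2*n)" using V by (auto simp: cmat_def)
  have P: "psd (cmat V + \<i> \<cdot>\<^sub>m cmat (omega n))" using assms unfolding gaussian_cov_def by auto
  have "\<forall>a\<in>carrier_vec (2*n). \<forall>b\<in>carrier_vec (2*n).
      rq (omega n) a a + rq (omega n) b b + rq V a b - rq V b a = 0 \<and>
      rq V a a + rq V b b - rq (omega n) a b + rq (omega n) b a \<ge> 0"
    using P by (subst (asm) psd_iff[OF X V omega_carrier]) (use V in \<open>auto simp: cmat_def complex_eq_iff\<close>)
  then show "\<forall>a\<in>carrier_vec (2*n). \<forall>b\<in>carrier_vec (2*n).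
      rq V a b = rq V b a \<and> rq V a a + rq V b b - om n a b + om n b a \<ge> 0"
    by (simp add: rq_omega)
qed

lemma cov_form_rev:
  assumes V: "V \<in> carrier_mat (2*n) (2*n)" and H: "\<forall>a\<in>carrier_vec (2*n). \<forall>b\<in>carrier_vec (2*n).
      rq V a b = rq V b a \<and> rq V a a + rq V b b - om n a b + om n b a \<ge> 0"
  shows "gaussian_cov n V"
proof -
  have X: "cmat V + \<i> \<cdot>\<^sub>m cmat (omega n) \<in> carrier_mat (2*n) (2*n)" using V by (auto simp: cmat_def)
  have "psd (cmat V + \<i> \<cdot>\<^sub>m cmat (omega n))"
    by (subst psd_iff[OF X V omega_carrier]) (use V H in \<open>auto simp: cmat_def complex_eq_iff rq_omega\<close>)
  then show ?thesis unfolding gaussian_cov_def using V by auto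
qed

lemma P_form:
  assumes A: "A \<in> carrier_mat (2*N) (2*N')" and B: "B \<in> carrier_mat (2*N') (2*N')"
  shows "Pc N A B \<longleftrightarrow> (\<forall>a\<in>carrier_vec (2*N'). \<forall>b\<in>carrier_vec (2*N'). rq B a b = rq B b a \<and>
       rq B a a + rq B b b + om N (A *\<^sub>v a) (A *\<^sub>v b) - om N (A *\<^sub>v b) (A *\<^sub>v a) \<ge> 0)"
  unfolding Pc_def by (rule gobs_form[OF B A])

lemma P_to_SB:
  assumes ch: "gaussian_channel N N' A B c" and P: "Pc N A B"
  shows "gaussian_steerability_breaking N N' A B"
  unfolding gaussian_steerability_breaking_def
proof (intro allI impI)
  fix M V0 assume M: "M \<ge> 1" and cov: "gaussian_cov (N+M) V0"
  have A: "A \<in> carrier_mat (2*N) (2*N')" and B: "B \<in> carrier_mat (2*N') (2*N')"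
    using ch unfolding gaussian_channel_def by auto
  have V0: "V0 \<in> carrier_mat (2*N+2*M) (2*N+2*M)" using cov_form(1)[OF cov] by (simp add: distrib_left)
  have HV: "\<forall>a\<in>carrier_vec (2*N+2*M). \<forall>b\<in>carrier_vec (2*N+2*M).
      rq V0 a b = rq V0 b a \<and> rq V0 a a + rq V0 b b - om (N+M) a b + om (N+M) b a \<ge> 0"
    using cov_form(2)[OF cov] by (simp add: distrib_left)
  note HP = P[unfolded P_form[OF A B]]
  have VC: "channel_cov N N' M A B V0 \<in> carrier_mat (2*N'+2*M) (2*N'+2*M)"
  proof -
    have Oo: "omega (N'+M) \<in> carrier_mat (2*N'+2*M) (2*N'+2*M)" by (rule omega_carrier2)
    have Oi: "omega (N+M) \<in> carrier_mat (2*N+2*M) (2*N+2*M)" by (rule omega_carrier2)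
    have D1: "dsum A (1\<^sub>m (2*M)) \<in> carrier_mat (2*N+2*M) (2*N'+2*M)" using A by (intro dsum_carrier) auto
    have DB: "dsum B (0\<^sub>m (2*M) (2*M)) \<in> carrier_mat (2*N'+2*M) (2*N'+2*M)" using B by (intro dsum_carrier) auto
    show ?thesis unfolding channel_cov_def using Oo Oi D1 DB V0
      by (intro add_carrier_mat mult_carrier_mat transpose_carrier_mat) auto
  qed
  show "breaks_steerability N N' M A B V0"
    unfolding breaks_steerability_def steer_form[OF VC]
  proof (intro ballI conjI)
    fix xA xB yA yB :: "real vec"
    assume xA: "xA \<in> carrier_vec (2*N')" and xB: "xB \<in> carrier_vec (2*M)"
      and yA: "yA \<in> carrier_vec (2*N')" and yB: "yB \<in> carrier_vec (2*M)"
    define a where "a = JT N' xA"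
    define b where "b = JT N' yA"
    have a: "a \<in> carrier_vec (2*N')" and b: "b \<in> carrier_vec (2*N')" unfolding a_def b_def by auto
    define \<alpha> where "\<alpha> = J N (A *\<^sub>v a)"
    define \<beta> where "\<beta> = J N (A *\<^sub>v b)"
    have al: "\<alpha> \<in> carrier_vec (2*N)" and be: "\<beta> \<in> carrier_vec (2*N)" unfolding \<alpha>_def \<beta>_def by auto
    note cc = channel_cov_rq[OF A B V0]
    have r1: "rq (channel_cov N N' M A B V0) (xA @\<^sub>v xB) (yA @\<^sub>v yB) = rq V0 (\<alpha> @\<^sub>v xB) (\<beta> @\<^sub>v yB) + rq B a b"
      using cc[OF xA xB yA yB] unfolding a_def b_def \<alpha>_def \<beta>_def .
    have r2: "rq (channel_cov N N' M A B V0) (yA @\<^sub>v yB) (xA @\<^sub>v xB) = rq V0 (\<beta> @\<^sub>v yB) (\<alpha> @\<^sub>v xB) + rq B b a"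
      using cc[OF yA yB xA xB] unfolding a_def b_def \<alpha>_def \<beta>_def .
    have r3: "rq (channel_cov N N' M A B V0) (xA @\<^sub>v xB) (xA @\<^sub>v xB) = rq V0 (\<alpha> @\<^sub>v xB) (\<alpha> @\<^sub>v xB) + rq B a a"
      using cc[OF xA xB xA xB] unfolding a_def b_def \<alpha>_def \<beta>_def .
    have r4: "rq (channel_cov N N' M A B V0) (yA @\<^sub>v yB) (yA @\<^sub>v yB) = rq V0 (\<beta> @\<^sub>v yB) (\<beta> @\<^sub>v yB) + rq B b b"
      using cc[OF yA yB yA yB] unfolding a_def b_def \<alpha>_def \<beta>_def .
    have p: "\<alpha> @\<^sub>v xB \<in> carrier_vec (2*N+2*M)" "\<beta> @\<^sub>v yB \<in> carrier_vec (2*N+2*M)"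
      using al be xB yB by auto
    note hv = HV[rule_format, OF p]
    note hp = HP[rule_format, OF a b]
    have o1: "om (N+M) (\<alpha> @\<^sub>v xB) (\<beta> @\<^sub>v yB) = om N (A *\<^sub>v a) (A *\<^sub>v b) + om M xB yB"
      using om_append[OF al be xB yB] unfolding \<alpha>_def \<beta>_def om_J .
    have o2: "om (N+M) (\<beta> @\<^sub>v yB) (\<alpha> @\<^sub>v xB) = om N (A *\<^sub>v b) (A *\<^sub>v a) + om M yB xB"
      using om_append[OF be al yB xB] unfolding \<alpha>_def \<beta>_def om_J .
    show "rq (channel_cov N N' M A B V0) (xA @\<^sub>v xB) (yA @\<^sub>v yB) =
          rq (channel_cov N N' M A B V0) (yA @\<^sub>v yB) (xA @\<^sub>v xB)"
      using r1 r2 hv hp by simp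
    show "0 \<le> rq (channel_cov N N' M A B V0) (xA @\<^sub>v xB) (xA @\<^sub>v xB) +
          rq (channel_cov N N' M A B V0) (yA @\<^sub>v yB) (yA @\<^sub>v yB) - om M xB yB + om M yB xB"
      using r3 r4 hv hp o1 o2 by linarith
  qed
qed

definition zs :: "nat \<Rightarrow> real" where "zs i = (if even i then 1 else -1)"

lemma zs_sq[simp]: "zs i * zs i = 1" unfolding zs_def by auto

lemma diag_mult:
  assumes M: "M \<in> carrier_mat n n" and q: "q \<in> carrier_vec n"
    and d: "\<And>i j. i < n \<Longrightarrow> j < n \<Longrightarrow> M $$ (i,j) = (if i = j then d i else 0)"
  shows "M *\<^sub>v q = vec n (\<lambda>i. d i * q$i)"
proof (rule eq_vecI)
  fix i assume "i < dim_vec (vec n (\<lambda>i. d i * q$i))"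
  then have i: "i < n" by simp
  have "(M *\<^sub>v q) $ i = (\<Sum>j<n. M $$ (i,j) * q$j)"
    using M q i by (simp add: scalar_prod_def atLeast0LessThan)
  also have "\<dots> = (\<Sum>j<n. if j = i then d i * q$j else 0)"
    using i d by (intro sum.cong) auto
  also have "\<dots> = d i * q$i" using i by simp
  finally show "(M *\<^sub>v q) $ i = vec n (\<lambda>i. d i * q$i) $ i" using i by simp
qed (use M in auto)

lemma epr_mult:
  assumes q1: "q1 \<in> carrier_vec (2*N)" and q2: "q2 \<in> carrier_vec (2*N)"
  shows "epr_cov N r *\<^sub>v (q1 @\<^sub>v q2) =
     vec (2*N) (\<lambda>i. cosh r * q1$i + sinh r * zs i * q2$i) @\<^sub>v vec (2*N) (\<lambda>i. sinh r * zs i * q1$i + cosh r * q2$i)"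
proof -
  define Z where "Z = (mat (2*N) (2*N) (\<lambda>(i,j). if i = j then (if even i then 1 else -1) else 0) :: real mat)"
  have E: "epr_cov N r = four_block_mat (cosh r \<cdot>\<^sub>m 1\<^sub>m (2*N)) (sinh r \<cdot>\<^sub>m Z) (sinh r \<cdot>\<^sub>m Z) (cosh r \<cdot>\<^sub>m 1\<^sub>m (2*N))"
    unfolding epr_cov_def Z_def Let_def by simp
  have C1: "cosh r \<cdot>\<^sub>m 1\<^sub>m (2*N) \<in> carrier_mat (2*N) (2*N)" by simp
  have C2: "sinh r \<cdot>\<^sub>m Z \<in> carrier_mat (2*N) (2*N)" unfolding Z_def by simp
  have m1: "(cosh r \<cdot>\<^sub>m 1\<^sub>m (2*N)) *\<^sub>v q = vec (2*N) (\<lambda>i. cosh r * q$i)" if "q \<in> carrier_vec (2*N)" for q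
    by (rule diag_mult[OF C1 that]) auto
  have m2: "(sinh r \<cdot>\<^sub>m Z) *\<^sub>v q = vec (2*N) (\<lambda>i. sinh r * zs i * q$i)" if "q \<in> carrier_vec (2*N)" for q
    by (rule diag_mult[OF C2 that]) (auto simp: Z_def zs_def)
  show ?thesis unfolding E four_block_mat_mult_vec[OF C1 C2 C2 C1 q1 q2] m1[OF q1] m1[OF q2] m2[OF q1] m2[OF q2]
    by (intro arg_cong2[where f = "(@\<^sub>v)"]; rule eq_vecI) auto
qed

lemma epr_rq:
  assumes p1: "p1 \<in> carrier_vec (2*N)" and p2: "p2 \<in> carrier_vec (2*N)"
    and q1: "q1 \<in> carrier_vec (2*N)" and q2: "q2 \<in> carrier_vec (2*N)"
  shows "rq (epr_cov N r) (p1 @\<^sub>v p2) (q1 @\<^sub>v q2) =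
    (\<Sum>i<2*N. cosh r * (p1$i * q1$i + p2$i * q2$i) + sinh r * zs i * (p1$i * q2$i + p2$i * q1$i))"
proof -
  have "rq (epr_cov N r) (p1 @\<^sub>v p2) (q1 @\<^sub>v q2) =
     p1 \<bullet> vec (2*N) (\<lambda>i. cosh r * q1$i + sinh r * zs i * q2$i) + p2 \<bullet> vec (2*N) (\<lambda>i. sinh r * zs i * q1$i + cosh r * q2$i)"
    unfolding rq_def epr_mult[OF q1 q2] by (rule scalar_prod_append) (use p1 p2 in auto)
  also have "\<dots> = (\<Sum>i<2*N. cosh r * (p1$i * q1$i + p2$i * q2$i) + sinh r * zs i * (p1$i * q2$i + p2$i * q1$i))"
    by (simp add: scalar_prod_def atLeast0LessThan sum.distrib[symmetric] algebra_simps)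
  finally show ?thesis .
qed

lemma epr_carrier: "epr_cov N r \<in> carrier_mat (2*N+2*N) (2*N+2*N)"
  unfolding epr_cov_def Let_def by (rule four_block_carrier_mat) auto

lemma mode_ineq:
  fixes c s a1 a2 a3 a4 b1 b2 b3 b4 :: real
  assumes c: "c > 0" and cs: "c^2 = s^2 + 1"
  shows "0 \<le> c*(a1^2+a2^2+a3^2+a4^2+b1^2+b2^2+b3^2+b4^2) + 2*s*(a1*a3 - a2*a4 + b1*b3 - b2*b4)
            - 2*(a1*b2 - a2*b1 + a3*b4 - a4*b3)"
proof -
  define E where "E = c*(a1^2+a2^2+a3^2+a4^2+b1^2+b2^2+b3^2+b4^2) + 2*s*(a1*a3 - a2*a4 + b1*b3 - b2*b4)
            - 2*(a1*b2 - a2*b1 + a3*b4 - a4*b3)"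
  have "2*c*E = (c*a1+s*a3-b2)^2 + (s*a1+c*a3-b4)^2 + (-a1+c*b2-s*b4)^2 + (-a3-s*b2+c*b4)^2
     + (c*a2-s*a4+b1)^2 + (-s*a2+c*a4+b3)^2 + (a2+c*b1+s*b3)^2 + (a4+s*b1+c*b3)^2
     + (c^2 - s^2 - 1) * (a1^2+a2^2+a3^2+a4^2+b1^2+b2^2+b3^2+b4^2)"
    unfolding E_def by (simp add: power2_eq_square algebra_simps)
  then have "2*c*E \<ge> 0" using cs by simp
  then have "E \<ge> 0" using c by (simp add: zero_le_mult_iff)
  then show ?thesis unfolding E_def .
qed

lemma zs_even[simp]: "zs (2*k) = 1" and zs_odd[simp]: "zs (2*k+1) = -1"
  unfolding zs_def by auto

lemma epr_valid: "gaussian_cov (N+N) (epr_cov N r)"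
proof (rule cov_form_rev)
  show "epr_cov N r \<in> carrier_mat (2*(N+N)) (2*(N+N))" using epr_carrier[of N r] by (simp add: distrib_left)
  show "\<forall>a\<in>carrier_vec (2*(N+N)). \<forall>b\<in>carrier_vec (2*(N+N)).
      rq (epr_cov N r) a b = rq (epr_cov N r) b a \<and>
      rq (epr_cov N r) a a + rq (epr_cov N r) b b - om (N+N) a b + om (N+N) b a \<ge> 0"
  proof (intro ballI conjI)
    fix a b :: "real vec" assume a: "a \<in> carrier_vec (2*(N+N))" and b: "b \<in> carrier_vec (2*(N+N))"
    obtain a1 a2 where A: "a1 \<in> carrier_vec (2*N)" "a2 \<in> carrier_vec (2*N)" "a = a1 @\<^sub>v a2"
      using split_vec[of a "2*N" "2*N"] a by (metis distrib_left)
    obtain b1 b2 where B: "b1 \<in> carrier_vec (2*N)" "b2 \<in> carrier_vec (2*N)" "b = b1 @\<^sub>v b2"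
      using split_vec[of b "2*N" "2*N"] b by (metis distrib_left)
    show "rq (epr_cov N r) a b = rq (epr_cov N r) b a"
      unfolding A(3) B(3) epr_rq[OF A(1,2) B(1,2)] epr_rq[OF B(1,2) A(1,2)]
      by (intro sum.cong) (auto simp: algebra_simps)
    define c where "c = cosh r"
    define s where "s = sinh r"
    define F where "F k = c*((a1$(2*k))^2+(a1$(2*k+1))^2+(a2$(2*k))^2+(a2$(2*k+1))^2
       +(b1$(2*k))^2+(b1$(2*k+1))^2+(b2$(2*k))^2+(b2$(2*k+1))^2)
       + 2*s*(a1$(2*k)*a2$(2*k) - a1$(2*k+1)*a2$(2*k+1) + b1$(2*k)*b2$(2*k) - b1$(2*k+1)*b2$(2*k+1))
       - 2*(a1$(2*k)*b1$(2*k+1) - a1$(2*k+1)*b1$(2*k) + a2$(2*k)*b2$(2*k+1) - a2$(2*k+1)*b2$(2*k))" for k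
    have c0: "c > 0" unfolding c_def using cosh_real_ge_1[of r] by linarith
    have cs: "c^2 = s^2 + 1" unfolding c_def s_def by (rule cosh_square_eq)
    have Fpos: "0 \<le> F k" for k unfolding F_def by (rule mode_ineq[OF c0 cs])
    have om1: "om (N+N) a b = om N a1 b1 + om N a2 b2" unfolding A(3) B(3) by (rule om_append[OF A(1) B(1) A(2) B(2)])
    have om2: "om (N+N) b a = - om (N+N) a b" by (rule om_antisym)
    have "rq (epr_cov N r) a a + rq (epr_cov N r) b b - om (N+N) a b + om (N+N) b a
       = rq (epr_cov N r) a a + rq (epr_cov N r) b b - 2 * (om N a1 b1 + om N a2 b2)"
      using om1 om2 by simp
    also have "\<dots> = (\<Sum>k<N. F k)"
      unfolding A(3) B(3) epr_rq[OF A(1,2) A(1,2)] epr_rq[OF B(1,2) B(1,2)] sum_pairs om_def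
        c_def[symmetric] s_def[symmetric]
      by (simp add: F_def sum.distrib sum_subtractf sum_distrib_left power2_eq_square algebra_simps zs_def)
    finally show "rq (epr_cov N r) a a + rq (epr_cov N r) b b - om (N+N) a b + om (N+N) b a \<ge> 0"
      using Fpos by (simp add: sum_nonneg)
  qed
qed

lemma limit_arg:
  fixes K C :: real
  assumes H: "\<forall>r\<ge>0. 0 \<le> K + exp (-r) * C" and C: "C \<ge> 0"
  shows "0 \<le> K"
proof (rule ccontr)
  assume "\<not> 0 \<le> K"
  then have K: "K < 0" by simp
  define t where "t = -K / (C+1)"
  have t: "t > 0" unfolding t_def using K C by (simp add: divide_neg_pos)
  define r where "r = max 0 (- ln t)"
  have r: "r \<ge> 0" unfolding r_def by simp
  have "-r \<le> ln t" unfolding r_def by simp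
  then have "exp (-r) \<le> exp (ln t)" by simp
  then have e: "exp (-r) \<le> t" using t by simp
  have "exp (-r) * C \<le> t * C" using e C by (simp add: mult_right_mono)
  also have "t * C < -K" unfolding t_def using K C by (simp add: field_simps)
  finally have "K + exp (-r) * C < 0" by simp
  with H r show False by force
qed

lemma EPR_to_P:
  assumes ch: "gaussian_channel N N' A B c"
    and H: "\<forall>r::real. r \<ge> 0 \<longrightarrow> breaks_steerability N N' N A B (epr_cov N r)"
  shows "Pc N A B"
proof -
  have A: "A \<in> carrier_mat (2*N) (2*N')" and B: "B \<in> carrier_mat (2*N') (2*N')"
    using ch unfolding gaussian_channel_def by auto
  show ?thesis unfolding P_form[OF A B]
  proof (intro ballI conjI)
    fix a b :: "real vec" assume a: "a \<in> carrier_vec (2*N')" and b: "b \<in> carrier_vec (2*N')"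
    show "rq B a b = rq B b a" using chan_sym[OF ch] a b by auto
    define \<alpha> where "\<alpha> = J N (A *\<^sub>v a)"
    define \<beta> where "\<beta> = J N (A *\<^sub>v b)"
    have al: "\<alpha> \<in> carrier_vec (2*N)" and be: "\<beta> \<in> carrier_vec (2*N)" unfolding \<alpha>_def \<beta>_def by auto
    define xA where "xA = J N' a"
    define yA where "yA = J N' b"
    have xA: "xA \<in> carrier_vec (2*N')" and yA: "yA \<in> carrier_vec (2*N')" unfolding xA_def yA_def by auto
    have xa: "JT N' xA = a" unfolding xA_def using J_JT a by simp
    have yb: "JT N' yA = b" unfolding yA_def using J_JT b by simp
    define xB where "xB = vec (2*N) (\<lambda>i. - zs i * \<alpha>$i)"
    define yB where "yB = vec (2*N) (\<lambda>i. - zs i * \<beta>$i)"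
    have xB: "xB \<in> carrier_vec (2*N)" and yB: "yB \<in> carrier_vec (2*N)" unfolding xB_def yB_def by auto
    define K where "K = rq B a a + rq B b b + om N (A *\<^sub>v a) (A *\<^sub>v b) - om N (A *\<^sub>v b) (A *\<^sub>v a)"
    define C where "C = 2 * (\<Sum>i<2*N. \<alpha>$i * \<alpha>$i) + 2 * (\<Sum>i<2*N. \<beta>$i * \<beta>$i)"
    have C: "C \<ge> 0" unfolding C_def by (intro add_nonneg_nonneg) (simp_all add: sum_nonneg)
    have Eq: "rq (epr_cov N r) (v @\<^sub>v vec (2*N) (\<lambda>i. - zs i * v$i)) (v @\<^sub>v vec (2*N) (\<lambda>i. - zs i * v$i))
       = (cosh r - sinh r) * (2 * (\<Sum>i<2*N. v$i * v$i))" if v: "v \<in> carrier_vec (2*N)" for v r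
    proof -
      have vc: "vec (2*N) (\<lambda>i. - zs i * v$i) \<in> carrier_vec (2*N)" by simp
      show ?thesis unfolding epr_rq[OF v vc v vc]
        by (auto simp: sum_distrib_left zs_def algebra_simps intro!: sum.cong)
    qed
    have omB: "om N xB yB = - om N \<alpha> \<beta>"
    proof -
      have "\<And>k. k < N \<Longrightarrow> 2*k < 2*N \<and> 2*k+1 < 2*N" by auto
      then show ?thesis unfolding om_def xB_def yB_def
        by (auto simp: sum_negf[symmetric] zs_def intro!: sum.cong)
    qed
    have omB2: "om N yB xB = om N \<alpha> \<beta>" using omB om_antisym[of N yB xB] by simp
    have oma: "om N \<alpha> \<beta> = om N (A *\<^sub>v a) (A *\<^sub>v b)" unfolding \<alpha>_def \<beta>_def by (rule om_J)
    have ombb: "om N \<beta> \<alpha> = om N (A *\<^sub>v b) (A *\<^sub>v a)" unfolding \<alpha>_def \<beta>_def by (rule om_J)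
    have "\<forall>r\<ge>0. 0 \<le> K + exp (-r) * C"
    proof (intro allI impI)
      fix r :: real assume r: "r \<ge> 0"
      have V0: "epr_cov N r \<in> carrier_mat (2*N+2*N) (2*N+2*N)" by (rule epr_carrier)
      have VC: "channel_cov N N' N A B (epr_cov N r) \<in> carrier_mat (2*N'+2*N) (2*N'+2*N)"
      proof -
        have Oo: "omega (N'+N) \<in> carrier_mat (2*N'+2*N) (2*N'+2*N)" by (rule omega_carrier2)
        have Oi: "omega (N+N) \<in> carrier_mat (2*N+2*N) (2*N+2*N)" by (rule omega_carrier2)
        have D1: "dsum A (1\<^sub>m (2*N)) \<in> carrier_mat (2*N+2*N) (2*N'+2*N)" using A by (intro dsum_carrier) auto
        have DB: "dsum B (0\<^sub>m (2*N) (2*N)) \<in> carrier_mat (2*N'+2*N) (2*N'+2*N)" using B by (intro dsum_carrier) auto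
        show ?thesis unfolding channel_cov_def using Oo Oi D1 DB V0
          by (intro add_carrier_mat mult_carrier_mat transpose_carrier_mat) auto
      qed
      have S: "non_steerable N' N (channel_cov N N' N A B (epr_cov N r))"
        using H r unfolding breaks_steerability_def by auto
      note S2 = S[unfolded steer_form[OF VC], rule_format, OF xA xB yA yB]
      have r1: "rq (channel_cov N N' N A B (epr_cov N r)) (xA @\<^sub>v xB) (xA @\<^sub>v xB)
          = (cosh r - sinh r) * (2 * (\<Sum>i<2*N. \<alpha>$i * \<alpha>$i)) + rq B a a"
        using channel_cov_rq[OF A B V0 xA xB xA xB] Eq[OF al, of r]
        unfolding xa \<alpha>_def[symmetric] xB_def by simp
      have r2: "rq (channel_cov N N' N A B (epr_cov N r)) (yA @\<^sub>v yB) (yA @\<^sub>v yB)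
          = (cosh r - sinh r) * (2 * (\<Sum>i<2*N. \<beta>$i * \<beta>$i)) + rq B b b"
        using channel_cov_rq[OF A B V0 yA yB yA yB] Eq[OF be, of r]
        unfolding yb \<beta>_def[symmetric] yB_def by simp
      show "0 \<le> K + exp (-r) * C"
        using S2 r1 r2 omB omB2 oma ombb om_antisym[of N "A *\<^sub>v b" "A *\<^sub>v a"] unfolding K_def C_def cosh_minus_sinh
        by (simp add: algebra_simps)
    qed
    then have "0 \<le> K" using limit_arg C by blast
    then show "0 \<le> rq B a a + rq B b b + om N (A *\<^sub>v a) (A *\<^sub>v b) - om N (A *\<^sub>v b) (A *\<^sub>v a)"
      unfolding K_def .
  qed
qed

theorem proposition5:
  fixes N N' :: nat and A B :: "real mat" and c :: "real vec"
  assumes "N \<ge> 1" and "N' \<ge> 1"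
    and "gaussian_channel N N' A B c"
  shows "(gaussian_incompatibility_breaking N N' A B c \<longleftrightarrow> gaussian_steerability_breaking N N' A B)
       \<and> (gaussian_steerability_breaking N N' A B \<longleftrightarrow>
            (\<forall>r::real. r \<ge> 0 \<longrightarrow> breaks_steerability N N' N A B (epr_cov N r)))"
proof -
  have SB_EPR: "\<forall>r::real. r \<ge> 0 \<longrightarrow> breaks_steerability N N' N A B (epr_cov N r)"
    if "gaussian_steerability_breaking N N' A B"
    using that assms(1) epr_valid unfolding gaussian_steerability_breaking_def by blast
  have PIB: "Pc N A B \<longleftrightarrow> gaussian_incompatibility_breaking N N' A B c"
    using P_to_IB[OF assms(3) assms(2)] IB_to_P[OF assms(3)] by blast
  have PSB: "Pc N A B \<longleftrightarrow> gaussian_steerability_breaking N N' A B"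
    using P_to_SB[OF assms(3)] SB_EPR EPR_to_P[OF assms(3)] by blast
  have PE: "Pc N A B \<longleftrightarrow> (\<forall>r::real. r \<ge> 0 \<longrightarrow> breaks_steerability N N' N A B (epr_cov N r))"
    using P_to_SB[OF assms(3)] SB_EPR EPR_to_P[OF assms(3)] by blast
  show ?thesis using PIB PSB PE by blast
qed

end
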